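(* For every dimension $d\ge 1$, $\theta^{\rm D}(1,d)=0$.
   Context: Fix integers $d\ge1$ and $1\le k\le 2d$. The directed $k$-neighbor graph ($k$-DnG) on $\mathbb{Z}^d$ is the random directed graph obtained by letting each vertex $x\in\mathbb{Z}^d$, independently of all other vertices, choose a uniformly random subset of exactly $k$ of its $2d$ nearest neighbors (in $\ell_1$-distance), and placing a directed edge from $x$ to each chosen neighbor. We write $\theta^{\rm D}(k,d)=\mathbb{P}(o\rightsquigarrow\infty \text{ in the $k$-DnG on }\mathbb{Z}^d)$, where $o$ is the origin and $o\rightsquigarrow\infty$ is the event that there is an infinite self-avoiding directed path along edges of the $k$-DnG starting at $o$ (equivalently, $o$ is connected by directed paths to vertices arbitrarily far away). *)

theory Defs
  imports "HOL-Analysis.Analysis" "HOL-Probability.Probability"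
begin

text \<open>Vertices of Z^d are vectors int^'d, where the finite type 'd indexes the
  d coordinates (so d = CARD('d) >= 1).  The 2d nearest neighbours of x are
  x + nbr_step (i, s): i a coordinate, s the sign (True = +1, False = -1).\<close>

definition nbr_step :: "'d::finite \<times> bool \<Rightarrow> int ^ 'd" where
  "nbr_step = (\<lambda>(i, s). (\<chi> j. if j = i then (if s then 1 else -1) else 0))"

definition choice_pmf :: "nat \<Rightarrow> ('d::finite \<times> bool) set pmf" where
  "choice_pmf k = pmf_of_set {S :: ('d \<times> bool) set. card S = k}"

text \<open>A configuration w assigns to each vertex x its chosen set w x of directions;
  the directed edges are x -> x + nbr_step e for e in w x.\<close>
definition dng_measure :: "nat \<Rightarrow> (int ^ 'd \<Rightarrow> ('d::finite \<times> bool) set) measure" where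
  "dng_measure k = PiM UNIV (\<lambda>_. measure_pmf (choice_pmf k))"

definition reaches_infinity :: "(int ^ 'd \<Rightarrow> ('d::finite \<times> bool) set) set" where
  "reaches_infinity = {w. \<exists>p :: nat \<Rightarrow> int ^ 'd. p 0 = 0 \<and> inj p \<and>
       (\<forall>n. \<exists>e \<in> w (p n). p (Suc n) = p n + nbr_step e)}"

end

theory Submission
  imports Defs
begin


definition pos :: "('d::finite \<times> bool) list \<Rightarrow> nat \<Rightarrow> int^'d" where
  "pos es i = sum_list (map nbr_step (take i es))"

definition valid :: "(int ^ 'd \<Rightarrow> ('d::finite \<times> bool) set) \<Rightarrow> ('d \<times> bool) list \<Rightarrow> bool" where
  "valid w es \<longleftrightarrow> inj_on (pos es) {..length es} \<and> (\<forall>i<length es. es!i \<in> w (pos es i))"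

definition En :: "nat \<Rightarrow> (int ^ 'd \<Rightarrow> ('d::finite \<times> bool) set) set" where
  "En n = {w. \<exists>es. length es = n \<and> valid w es}"

lemma pos_Suc: "i < length es \<Longrightarrow> pos es (Suc i) = pos es i + nbr_step (es!i)"
  by (simp add: pos_def take_Suc_conv_app_nth)

lemma pos_append: "i \<le> length es \<Longrightarrow> pos (es @ fs) i = pos es i"
  by (simp add: pos_def)

lemma valid_prefix: "valid w (es @ fs) \<Longrightarrow> valid w es"
proof -
  assume v: "valid w (es @ fs)"
  have i1: "inj_on (pos (es @ fs)) {..length (es @ fs)}" using v unfolding valid_def by (rule conjunct1)
  have i2: "inj_on (pos (es @ fs)) {..length es}"
    by (rule inj_on_subset[OF i1]) auto
  have i3: "inj_on (pos es) {..length es}"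
    unfolding inj_on_def
  proof (intro ballI impI)
    fix a b assume a: "a \<in> {..length es}" and b: "b \<in> {..length es}" and ab: "pos es a = pos es b"
    have "pos (es @ fs) a = pos (es @ fs) b"
      using a b ab pos_append[of a es fs] pos_append[of b es fs] by simp
    then show "a = b" by (rule inj_onD[OF i2 _ a b])
  qed
  have all: "\<forall>j<length (es@fs). (es@fs)!j \<in> w (pos (es@fs) j)" using v unfolding valid_def by (rule conjunct2)
  have "\<forall>i<length es. es!i \<in> w (pos es i)"
  proof (intro allI impI)
    fix i assume i: "i < length es"
    then have "(es@fs)!i \<in> w (pos (es@fs) i)" using all by simp
    moreover have "(es@fs)!i = es!i" using i by (rule nth_append_left)
    moreover have "pos (es@fs) i = pos es i" using i by (intro pos_append) simp
    ultimately show "es!i \<in> w (pos es i)" by simp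
  qed
  with i3 show ?thesis unfolding valid_def by (rule conjI)
qed

lemma ri_sub: "reaches_infinity \<subseteq> (En n :: (int ^ 'd \<Rightarrow> ('d::finite \<times> bool) set) set)"
proof
  fix w :: "int ^ 'd \<Rightarrow> ('d \<times> bool) set" assume "w \<in> reaches_infinity"
  then obtain p :: "nat \<Rightarrow> int^'d" where p0: "p 0 = 0" and ip: "inj p"
    and st: "\<And>n. \<exists>e \<in> w (p n). p (Suc n) = p n + nbr_step e"
    unfolding reaches_infinity_def by blast
  define f where "f n = (SOME e. e \<in> w (p n) \<and> p (Suc n) = p n + nbr_step e)" for n
  have f: "f n \<in> w (p n) \<and> p (Suc n) = p n + nbr_step (f n)" for n
    unfolding f_def by (rule someI_ex) (use st in blast)
  define es where "es = map f [0..<n]"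
  have pe: "i \<le> n \<Longrightarrow> pos es i = p i" for i
  proof (induction i)
    case 0 then show ?case by (simp add: pos_def p0)
  next
    case (Suc i)
    then have "pos es (Suc i) = pos es i + nbr_step (es!i)" by (intro pos_Suc) (simp add: es_def)
    then show ?case using Suc f[of i] by (simp add: es_def)
  qed
  have "valid w es"
    unfolding valid_def
  proof
    show "inj_on (pos es) {..length es}"
      using ip pe by (simp add: es_def inj_on_def inj_def)
    show "\<forall>i<length es. es ! i \<in> w (pos es i)"
      using pe f by (simp add: es_def)
  qed
  then show "w \<in> En n" unfolding En_def by (intro CollectI exI[of _ es]) (simp add: es_def)
qed

definition good where "good w es \<longleftrightarrow> valid w es \<and> (\<forall>m. \<exists>fs. length fs = m \<and> valid w (es @ fs))"

lemma good_step:
  assumes "good w es" shows "\<exists>e. good w (es @ [e])"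
proof (rule ccontr)
  assume "\<not> ?thesis"
  then have ng: "\<not> good w (es @ [e])" for e by blast
  have "\<forall>e. \<exists>m. \<forall>fs. length fs = m \<longrightarrow> \<not> valid w (es @ [e] @ fs)"
  proof
    fix e
    show "\<exists>m. \<forall>fs. length fs = m \<longrightarrow> \<not> valid w (es @ [e] @ fs)"
    proof (cases "valid w (es @ [e])")
      case True
      then obtain k where k: "\<not>(\<exists>fs. length fs = k \<and> valid w ((es@[e])@fs))"
        using ng[of e] unfolding good_def by blast
      show ?thesis
      proof (intro exI[of _ k] allI impI notI)
        fix fs assume "length fs = k" "valid w (es @ [e] @ fs)"
        then show False using k by simp
      qed
    next
      case False
      then show ?thesis by (intro exI[of _ 0]) auto
    qed
  qed
  then have "\<exists>m. \<forall>e. \<forall>fs. length fs = m e \<longrightarrow> \<not> valid w (es @ [e] @ fs)"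
    by (rule choice)
  then obtain m where m: "\<forall>e fs. length fs = m e \<longrightarrow> \<not> valid w (es @ [e] @ fs)"
    by blast
  define M where "M = Max (range m)"
  have mle: "m e \<le> M" for e unfolding M_def by (rule Max_ge) auto
  obtain fs where fs: "length fs = Suc M" "valid w (es @ fs)" using assms unfolding good_def by blast
  then obtain e r where r: "fs = e # r" by (cases fs) auto
  have v1: "valid w (es @ [e] @ take (m e) r)"
    using valid_prefix[of w "es @ [e] @ take (m e) r" "drop (m e) r"] fs(2) r by simp
  have lt: "length (take (m e) r) = m e" using fs(1) r mle[of e] by simp
  have "\<not> valid w (es @ [e] @ take (m e) r)" by (rule m[rule_format, OF lt])
  then show False using v1 by (rule notE)
qed

primrec L :: "(int ^ 'd \<Rightarrow> ('d::finite \<times> bool) set) \<Rightarrow> nat \<Rightarrow> ('d \<times> bool) list" where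
  "L w 0 = []"
| "L w (Suc n) = L w n @ [SOME e. good w (L w n @ [e])]"

lemma En_sub: "(\<Inter>n. En n) \<subseteq> (reaches_infinity :: (int ^ 'd \<Rightarrow> ('d::finite \<times> bool) set) set)"
proof
  fix w :: "int ^ 'd \<Rightarrow> ('d \<times> bool) set" assume w: "w \<in> (\<Inter>n. En n)"
  have v0: "valid w []" by (simp add: valid_def)
  have "\<forall>m. \<exists>fs. length fs = m \<and> valid w ([] @ fs)"
  proof
    fix m
    from w have "w \<in> En m" by blast
    then show "\<exists>fs. length fs = m \<and> valid w ([] @ fs)" by (simp add: En_def)
  qed
  with v0 have g0: "good w []" unfolding good_def by blast
  have gL: "good w (L w n)" for n
  proof (induction n)
    case 0 then show ?case using g0 by simp
  next
    case (Suc n) then show ?case using someI_ex[OF good_step[OF Suc.IH]] by simp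
  qed
  have lenL: "length (L w n) = n" for n by (induction n) auto
  have takeL: "m \<le> n \<Longrightarrow> take m (L w n) = L w m" for m n
  proof (induction n)
    case 0 then show ?case by simp
  next
    case (Suc n) then show ?case
      by (cases "m = Suc n") (auto simp: lenL le_Suc_eq)
  qed
  define p where "p n = pos (L w n) n" for n
  have pp: "m \<le> n \<Longrightarrow> p m = pos (L w n) m" for m n
  proof -
    assume "m \<le> n"
    then have "take m (L w n) = L w m" by (rule takeL)
    then show ?thesis unfolding p_def pos_def using lenL[of m] by simp
  qed
  have vL: "valid w (L w n)" for n using gL good_def by blast
  have p0: "p 0 = 0" by (simp add: p_def pos_def)
  have ip: "inj p"
  proof (rule injI)
    fix a b assume ab: "p a = p b"
    define n where "n = max a b"
    have "inj_on (pos (L w n)) {..n}" using vL[of n] lenL[of n] by (simp add: valid_def)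
    moreover have "pos (L w n) a = pos (L w n) b" using ab pp[of a n] pp[of b n] by (simp add: n_def)
    moreover have "a \<in> {..n}" "b \<in> {..n}" by (auto simp: n_def)
    ultimately show "a = b" by (meson inj_onD)
  qed
  have st: "\<exists>e \<in> w (p n). p (Suc n) = p n + nbr_step e" for n
  proof -
    have l: "n < length (L w (Suc n))" using lenL[of "Suc n"] by simp
    have e1: "p n = pos (L w (Suc n)) n" using pp[of n "Suc n"] by simp
    have e2: "p (Suc n) = pos (L w (Suc n)) (Suc n)" by (simp only: p_def)
    have "p (Suc n) = p n + nbr_step (L w (Suc n) ! n)"
      unfolding e1 e2 by (rule pos_Suc[OF l])
    moreover have "L w (Suc n) ! n \<in> w (p n)"
      using vL[of "Suc n"] l unfolding e1 valid_def by blast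
    ultimately show ?thesis by blast
  qed
  show "w \<in> reaches_infinity" unfolding reaches_infinity_def
    using p0 ip st by (intro CollectI exI[of _ p]) blast
qed

lemma ri_eq: "reaches_infinity = (\<Inter>n. En n)"
  using En_sub ri_sub by blast



definition flip :: "'d \<times> bool \<Rightarrow> 'd \<times> bool" where "flip e = (fst e, \<not> snd e)"

lemma step_flip: "nbr_step e + nbr_step (flip e) = (0 :: int ^ 'd::finite)"
  by (cases e) (simp add: vec_eq_iff nbr_step_def flip_def)

fun nb :: "('d \<times> bool) list \<Rightarrow> bool" where
  "nb [] = True"
| "nb [e] = True"
| "nb (e # f # r) = (f \<noteq> flip e \<and> nb (f # r))"

lemma pos_Cons: "pos (e # es) (Suc i) = nbr_step e + pos es i"
  by (simp add: pos_def)

lemma pos_0: "pos es 0 = 0"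
  by (simp add: pos_def)

lemma inj_nb: "inj_on (pos es) {..length es} \<Longrightarrow> nb (es :: ('d::finite \<times> bool) list)"
proof (induction es rule: nb.induct)
  case 1 then show ?case by simp
next
  case (2 e) then show ?case by simp
next
  case (3 e f r)
  have i: "inj_on (pos (e # f # r)) {..length (e # f # r)}" by (rule "3.prems")
  have ff: "f \<noteq> flip e"
  proof
    assume fe: "f = flip e"
    have "pos (e # f # r) (Suc (Suc 0)) = nbr_step e + (nbr_step f + pos r 0)"
      by (simp only: pos_Cons)
    also have "\<dots> = 0" using fe step_flip[of e] by (simp add: pos_0)
    also have "\<dots> = pos (e # f # r) 0" by (simp add: pos_0)
    finally have "Suc (Suc 0) = 0" by (rule inj_onD[OF i]) auto
    then show False by simp
  qed
  have "inj_on (pos (f # r)) {..length (f # r)}"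
    unfolding inj_on_def
  proof (intro ballI impI)
    fix a b assume a: "a \<in> {..length (f # r)}" and b: "b \<in> {..length (f # r)}"
      and ab: "pos (f # r) a = pos (f # r) b"
    have "pos (e # f # r) (Suc a) = pos (e # f # r) (Suc b)"
      by (simp only: pos_Cons ab)
    then have "Suc a = Suc b" by (rule inj_onD[OF i]) (use a b in auto)
    then show "a = b" by simp
  qed
  then have "nb (f # r)" by (rule "3.IH")
  with ff show ?case by simp
qed

lemma card_minus_flip: "card (UNIV - {flip e} :: ('d::finite \<times> bool) set) = CARD('d \<times> bool) - 1"
  by (simp add: card_Diff_singleton)

lemma cnt: "card {es :: ('d::finite \<times> bool) list. length es = n \<and> nb (e0 # es)} \<le> (CARD('d \<times> bool) - 1) ^ n"
proof (induction n arbitrary: e0)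
  case 0
  have "{es. length es = 0 \<and> nb (e0 # es)} = {[]}" by auto
  then show ?case by simp
next
  case (Suc n)
  let ?A = "\<lambda>f. {es. length es = n \<and> nb (f # es)} :: ('d \<times> bool) list set"
  have eq: "{es. length es = Suc n \<and> nb (e0 # es)} = (\<Union>f\<in>UNIV - {flip e0}. Cons f ` ?A f)"
  proof (intro equalityI subsetI)
    fix es assume "es \<in> {es. length es = Suc n \<and> nb (e0 # es)}"
    then obtain f r where "es = f # r" "length r = n" "nb (e0 # f # r)"
      by (auto simp: length_Suc_conv)
    then show "es \<in> (\<Union>f\<in>UNIV - {flip e0}. Cons f ` ?A f)" by auto
  next
    fix es assume "es \<in> (\<Union>f\<in>UNIV - {flip e0}. Cons f ` ?A f)"
    then show "es \<in> {es. length es = Suc n \<and> nb (e0 # es)}" by auto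
  qed
  have "card {es. length es = Suc n \<and> nb (e0 # es)} \<le> (\<Sum>f\<in>UNIV - {flip e0}. card (Cons f ` ?A f))"
    unfolding eq by (rule card_UN_le) simp
  also have "\<dots> \<le> (\<Sum>f\<in>UNIV - {flip e0}. (CARD('d \<times> bool) - 1) ^ n)"
  proof (rule sum_mono)
    fix f :: "'d \<times> bool"
    have "card (Cons f ` ?A f) = card (?A f)" by (rule card_image) (simp add: inj_on_def)
    then show "card (Cons f ` ?A f) \<le> (CARD('d \<times> bool) - 1) ^ n" using Suc.IH[of f] by simp
  qed
  also have "\<dots> = (CARD('d \<times> bool) - 1) ^ Suc n"
    by (simp add: card_minus_flip)
  finally show ?case .
qed
lemma cnt2: "card {es :: ('d::finite \<times> bool) list. length es = Suc n \<and> nb es} \<le> CARD('d \<times> bool) * (CARD('d \<times> bool) - 1) ^ n"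
proof -
  let ?A = "\<lambda>f. {es. length es = n \<and> nb (f # es)} :: ('d \<times> bool) list set"
  have eq: "{es. length es = Suc n \<and> nb es} = (\<Union>f. Cons f ` ?A f)"
    by (auto simp: length_Suc_conv)
  have "card {es :: ('d \<times> bool) list. length es = Suc n \<and> nb es} \<le> (\<Sum>f\<in>UNIV. card (Cons f ` ?A f))"
    unfolding eq by (rule card_UN_le) simp
  also have "\<dots> \<le> (\<Sum>f\<in>(UNIV::('d \<times> bool) set). (CARD('d \<times> bool) - 1) ^ n)"
  proof (rule sum_mono)
    fix f :: "'d \<times> bool"
    have "card (Cons f ` ?A f) = card (?A f)" by (rule card_image) (simp add: inj_on_def)
    then show "card (Cons f ` ?A f) \<le> (CARD('d \<times> bool) - 1) ^ n" using cnt[of n f] by simp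
  qed
  also have "\<dots> = CARD('d \<times> bool) * (CARD('d \<times> bool) - 1) ^ n" by simp
  finally show ?thesis .
qed

definition Ls :: "nat \<Rightarrow> ('d::finite \<times> bool) list set" where
  "Ls n = {es. length es = n \<and> inj_on (pos es) {..n}}"

lemma finite_Ls: "finite (Ls n :: ('d::finite \<times> bool) list set)"
proof (rule finite_subset)
  show "Ls n \<subseteq> {es. set es \<subseteq> UNIV \<and> length es = n}" by (auto simp: Ls_def)
  show "finite {es :: ('d \<times> bool) list. set es \<subseteq> UNIV \<and> length es = n}"
    by (rule finite_lists_length_eq) simp
qed

lemma card_Ls: "card (Ls (Suc n) :: ('d::finite \<times> bool) list set) \<le> CARD('d \<times> bool) * (CARD('d \<times> bool) - 1) ^ n"
proof -
  have "Ls (Suc n) \<subseteq> {es :: ('d \<times> bool) list. length es = Suc n \<and> nb es}"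
    by (auto simp: Ls_def intro!: inj_nb)
  moreover have "finite {es :: ('d \<times> bool) list. length es = Suc n \<and> nb es}"
    by (rule finite_subset[OF _ finite_lists_length_eq[of UNIV "Suc n"]]) auto
  ultimately have "card (Ls (Suc n) :: ('d \<times> bool) list set) \<le> card {es :: ('d \<times> bool) list. length es = Suc n \<and> nb es}"
    by (rule card_mono[rotated])
  then show ?thesis by (rule le_trans[OF _ cnt2])
qed



definition Cy :: "('d::finite \<times> bool) list \<Rightarrow> (int ^ 'd \<Rightarrow> ('d \<times> bool) set) set" where
  "Cy es = {w. \<forall>i<length es. es!i \<in> w (pos es i)}"

lemma En_eq: "En n = (\<Union>es\<in>Ls n. Cy es)"
  by (auto simp: En_def Ls_def Cy_def valid_def)

lemma prob_P: "prob_space (dng_measure 1 :: (int ^ 'd::finite \<Rightarrow> ('d \<times> bool) set) measure)"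
  unfolding dng_measure_def by (rule prob_space_PiM) (rule prob_space_measure_pmf)

lemma inj_Ls: "es \<in> Ls n \<Longrightarrow> inj_on (pos es) {..<length es}"
  by (auto simp: Ls_def intro: inj_on_subset)

lemma Cy_emb:
  fixes es :: "('d::finite \<times> bool) list"
  assumes es: "es \<in> Ls n"
  defines "J \<equiv> pos es ` {..<length es}"
  defines "X \<equiv> (\<lambda>v. {S. es ! the_inv_into {..<length es} (pos es) v \<in> S})"
  shows "Cy es = prod_emb UNIV (\<lambda>_. measure_pmf (choice_pmf 1)) J (PiE J X)"
proof -
  have inj: "inj_on (pos es) {..<length es}" by (rule inj_Ls[OF es])
  have X: "X (pos es i) = {S. es ! i \<in> S}" if "i < length es" for i
    unfolding X_def using the_inv_into_f_f[OF inj, of i] that by simp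
  have "w \<in> Cy es \<longleftrightarrow> (\<forall>v\<in>J. w v \<in> X v)" for w
    unfolding Cy_def J_def using X by auto
  then show ?thesis
    unfolding prod_emb_def by (auto simp: restrict_PiE_iff)
qed

lemma card_single: "card {S :: ('d::finite \<times> bool) set. card S = 1} = CARD('d \<times> bool)"
proof -
  have "{S :: ('d \<times> bool) set. card S = 1} = range (\<lambda>e. {e})"
    by (auto simp: card_1_singleton_iff)
  moreover have "card (range (\<lambda>e :: 'd \<times> bool. {e})) = CARD('d \<times> bool)"
    by (rule card_image) (simp add: inj_on_def)
  ultimately show ?thesis by simp
qed

lemma meas_choice: "emeasure (measure_pmf (choice_pmf 1 :: ('d::finite \<times> bool) set pmf)) {S. e \<in> S}
   = ennreal (1 / CARD('d \<times> bool))"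
proof -
  let ?A = "{S :: ('d \<times> bool) set. card S = 1}"
  have fin: "finite ?A" by simp
  have ne: "?A \<noteq> {}" by (auto intro: exI[of _ "{e}"])
  have int: "?A \<inter> {S. e \<in> S} = {{e}}"
    by (auto simp: card_1_singleton_iff)
  have "emeasure (measure_pmf (pmf_of_set ?A)) {S. e \<in> S} = card (?A \<inter> {S. e \<in> S}) / card ?A"
    by (rule emeasure_pmf_of_set[OF ne fin])
  also have "\<dots> = ennreal (1 / CARD('d \<times> bool))"
    unfolding int card_single
    by (simp add: divide_ennreal ennreal_of_nat_eq_real_of_nat)
  finally show ?thesis by (simp add: choice_pmf_def)
qed

lemma emeasure_Cy:
  fixes es :: "('d::finite \<times> bool) list"
  assumes es: "es \<in> Ls n"
  shows "emeasure (dng_measure 1) (Cy es) = ennreal ((1 / CARD('d \<times> bool)) ^ length es)"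
proof -
  define J where "J = pos es ` {..<length es}"
  define X where "X = (\<lambda>v. {S. es ! the_inv_into {..<length es} (pos es) v \<in> S})"
  have inj: "inj_on (pos es) {..<length es}" by (rule inj_Ls[OF es])
  have X: "X (pos es i) = {S. es ! i \<in> S}" if "i < length es" for i
    unfolding X_def using the_inv_into_f_f[OF inj, of i] that by simp
  have "emeasure (dng_measure 1) (Cy es) =
      emeasure (PiM UNIV (\<lambda>_. measure_pmf (choice_pmf 1))) (prod_emb UNIV (\<lambda>_. measure_pmf (choice_pmf 1)) J (PiE J X))"
    unfolding dng_measure_def J_def X_def using Cy_emb[OF es] by simp
  also have "\<dots> = (\<Prod>v\<in>J. emeasure (measure_pmf (choice_pmf 1)) (X v))"
    by (rule emeasure_PiM_emb) (auto simp: J_def prob_space_measure_pmf)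
  also have "\<dots> = (\<Prod>i\<in>{..<length es}. emeasure (measure_pmf (choice_pmf 1)) (X (pos es i)))"
    unfolding J_def by (simp add: prod.reindex[OF inj])
  also have "\<dots> = (\<Prod>i\<in>{..<length es}. ennreal (1 / CARD('d \<times> bool)))"
    by (rule prod.cong[OF refl]) (simp only: lessThan_iff X meas_choice)
  also have "\<dots> = ennreal ((1 / CARD('d \<times> bool)) ^ length es)"
    by (simp add: prod_ennreal ennreal_power)
  finally show ?thesis .
qed

lemma sets_Cy:
  fixes es :: "('d::finite \<times> bool) list"
  assumes es: "es \<in> Ls n"
  shows "Cy es \<in> sets (dng_measure 1)"
  unfolding Cy_emb[OF es] dng_measure_def by (rule sets_PiM_I) auto

lemma sets_En: "(En n :: (int ^ 'd::finite \<Rightarrow> ('d \<times> bool) set) set) \<in> sets (dng_measure 1)"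
  unfolding En_eq using sets_Cy finite_Ls by (intro sets.finite_UN) auto

lemma measure_En:
  "measure (dng_measure 1) (En (Suc n) :: (int ^ 'd::finite \<Rightarrow> ('d \<times> bool) set) set)
     \<le> ((real CARD('d \<times> bool) - 1) / real CARD('d \<times> bool)) ^ n"
proof -
  let ?P = "dng_measure 1 :: (int ^ 'd \<Rightarrow> ('d \<times> bool) set) measure"
  let ?D = "real CARD('d \<times> bool)"
  interpret P: prob_space ?P by (rule prob_P)
  have mc: "measure ?P (Cy es) = (1 / ?D) ^ Suc n" if "es \<in> Ls (Suc n)" for es
  proof -
    have "length es = Suc n" using that by (simp add: Ls_def)
    then show ?thesis using emeasure_Cy[OF that] by (simp add: measure_def)
  qed
  have "measure ?P (En (Suc n)) \<le> (\<Sum>es\<in>Ls (Suc n). measure ?P (Cy es))"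
    unfolding En_eq by (rule P.finite_measure_subadditive_finite) (use finite_Ls sets_Cy in auto)
  also have "\<dots> = real (card (Ls (Suc n) :: ('d \<times> bool) list set)) * (1 / ?D) ^ Suc n"
    using mc by simp
  also have "\<dots> \<le> real (CARD('d \<times> bool) * (CARD('d \<times> bool) - 1) ^ n) * (1 / ?D) ^ Suc n"
  proof (rule mult_right_mono)
    have cl: "card (Ls (Suc n) :: ('d \<times> bool) list set) \<le> CARD('d \<times> bool) * (CARD('d \<times> bool) - 1) ^ n"
      by (rule card_Ls)
    then show "real (card (Ls (Suc n) :: ('d \<times> bool) list set)) \<le> real (CARD('d \<times> bool) * (CARD('d \<times> bool) - 1) ^ n)"
      by (simp only: of_nat_le_iff)
  qed simp
  also have "\<dots> = ((?D - 1) / ?D) ^ n"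
  proof -
    have "CARD('d \<times> bool) \<ge> 1" by (simp add: Suc_le_eq)
    then have "real (CARD('d \<times> bool) - 1) = ?D - 1" by (simp add: of_nat_diff)
    moreover have "?D > 0" by simp
    ultimately show ?thesis by (simp add: power_divide field_simps)
  qed
  finally show ?thesis .
qed



theorem lemma2p1:
  shows "reaches_infinity \<in> null_sets (dng_measure 1 :: (int ^ 'd::finite \<Rightarrow> ('d \<times> bool) set) measure)"
proof -
  let ?P = "dng_measure 1 :: (int ^ 'd \<Rightarrow> ('d \<times> bool) set) measure"
  let ?D = "real CARD('d \<times> bool)"
  interpret P: prob_space ?P by (rule prob_P)
  have S: "reaches_infinity \<in> sets ?P"
    unfolding ri_eq by (rule sets.countable_INT) (use sets_En in auto)
  have le: "measure ?P reaches_infinity \<le> ((?D - 1) / ?D) ^ n" for n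
  proof -
    have "measure ?P reaches_infinity \<le> measure ?P (En (Suc n))"
      by (rule P.finite_measure_mono[OF ri_sub sets_En])
    also have "\<dots> \<le> ((?D - 1) / ?D) ^ n" by (rule measure_En)
    finally show ?thesis .
  qed
  have z: "measure ?P reaches_infinity = 0"
  proof (rule ccontr)
    assume "measure ?P reaches_infinity \<noteq> 0"
    then have pos: "measure ?P reaches_infinity > 0" using measure_nonneg[of ?P reaches_infinity] by linarith
    have "?D > 0" by simp
    then have "(?D - 1) / ?D < 1" by simp
    then obtain n where "((?D - 1) / ?D) ^ n < measure ?P reaches_infinity"
      using real_arch_pow_inv[OF pos] by blast
    with le[of n] show False by linarith
  qed
  show ?thesis
    by (rule null_setsI) (use S z P.emeasure_eq_measure in auto)
qed


end
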